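(* Let $P \in S$ with $P \notin K$. Then the centralizer $C_S(P)$ is commutative.
   Context: Standing conventions: $K$ is a field, $R = K[y]$, $\sigma$ is a $K$-algebra endomorphism of $R$ with $\deg_y(\sigma(y)) > 1$, and $\delta$ is a $K$-linear $\sigma$-derivation of $R$ ($\delta(ab) = \sigma(a)\delta(b) + \delta(a)b$). $S = R[x;\sigma,\delta]$ is the Ore extension (polynomials $\sum r_i x^i$, $r_i\in R$, with $xr = \sigma(r)x + \delta(r)$). $C_S(P)$ is the set of elements of $S$ commuting with $P$. *)

theory Defs
  imports "HOL-Computational_Algebra.Polynomial"
begin

text \<open>R = K[y] is 'a poly; S = R[x; sigma, delta] is represented by 'a poly poly,
  the element  sum_i r_i x^i  being the polynomial with coefficients r_i (coefficients on the left).\<close>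

definition K_alg_endo :: "('a::field poly \<Rightarrow> 'a poly) \<Rightarrow> bool" where
  "K_alg_endo \<sigma> \<longleftrightarrow>
     (\<forall>a b. \<sigma> (a + b) = \<sigma> a + \<sigma> b) \<and>
     (\<forall>a b. \<sigma> (a * b) = \<sigma> a * \<sigma> b) \<and>
     (\<forall>c a. \<sigma> (smult c a) = smult c (\<sigma> a)) \<and>
     \<sigma> 1 = 1"

definition K_linear_sigma_derivation ::
  "('a::field poly \<Rightarrow> 'a poly) \<Rightarrow> ('a poly \<Rightarrow> 'a poly) \<Rightarrow> bool" where
  "K_linear_sigma_derivation \<sigma> \<delta> \<longleftrightarrow>
     (\<forall>a b. \<delta> (a + b) = \<delta> a + \<delta> b) \<and>
     (\<forall>c a. \<delta> (smult c a) = smult c (\<delta> a)) \<and>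
     (\<forall>a b. \<delta> (a * b) = \<sigma> a * \<delta> b + \<delta> a * b)"

text \<open>Left multiplication by x:  x * (sum r_i x^i) = sum (sigma(r_i) x^(i+1) + delta(r_i) x^i).\<close>
definition ore_xmul ::
  "('a::field poly \<Rightarrow> 'a poly) \<Rightarrow> ('a poly \<Rightarrow> 'a poly) \<Rightarrow> 'a poly poly \<Rightarrow> 'a poly poly" where
  "ore_xmul \<sigma> \<delta> Q = pCons 0 (map_poly \<sigma> Q) + map_poly \<delta> Q"

definition ore_mult ::
  "('a::field poly \<Rightarrow> 'a poly) \<Rightarrow> ('a poly \<Rightarrow> 'a poly) \<Rightarrow> 'a poly poly \<Rightarrow> 'a poly poly \<Rightarrow> 'a poly poly" where
  "ore_mult \<sigma> \<delta> P Q =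
     (\<Sum>i\<le>degree P. map_poly (\<lambda>r. coeff P i * r) ((ore_xmul \<sigma> \<delta> ^^ i) Q))"

definition ore_centralizer ::
  "('a::field poly \<Rightarrow> 'a poly) \<Rightarrow> ('a poly \<Rightarrow> 'a poly) \<Rightarrow> 'a poly poly \<Rightarrow> 'a poly poly set" where
  "ore_centralizer \<sigma> \<delta> P = {Q. ore_mult \<sigma> \<delta> P Q = ore_mult \<sigma> \<delta> Q P}"

end

theory Submission
  imports Defs
begin

locale ore =
  fixes \<sigma> \<delta> :: "'a::field poly \<Rightarrow> 'a poly"
  assumes endo: "K_alg_endo \<sigma>"
    and degs: "degree (\<sigma> [:0, 1:]) > 1"
    and der: "K_linear_sigma_derivation \<sigma> \<delta>"
begin

lemma s_add: "\<sigma> (a + b) = \<sigma> a + \<sigma> b" using endo unfolding K_alg_endo_def by blast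
lemma s_mult: "\<sigma> (a * b) = \<sigma> a * \<sigma> b" using endo unfolding K_alg_endo_def by blast
lemma s_smult: "\<sigma> (smult c a) = smult c (\<sigma> a)" using endo unfolding K_alg_endo_def by blast
lemma s_one: "\<sigma> 1 = 1" using endo unfolding K_alg_endo_def by blast
lemma d_add: "\<delta> (a + b) = \<delta> a + \<delta> b" using der unfolding K_linear_sigma_derivation_def by blast
lemma d_smult: "\<delta> (smult c a) = smult c (\<delta> a)" using der unfolding K_linear_sigma_derivation_def by blast
lemma d_mult: "\<delta> (a * b) = \<sigma> a * \<delta> b + \<delta> a * b" using der unfolding K_linear_sigma_derivation_def by blast

lemma s_zero[simp]: "\<sigma> 0 = 0"
  using s_add[of 0 0] by (metis add_cancel_right_right add_0)
lemma d_zero[simp]: "\<delta> 0 = 0"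
  using d_add[of 0 0] by (metis add_cancel_right_right add_0)
lemma s_minus: "\<sigma> (- a) = - \<sigma> a"
  using s_add[of a "-a"] by (metis minus_unique add.right_inverse s_zero)
lemma d_minus: "\<delta> (- a) = - \<delta> a"
  using d_add[of a "-a"] by (metis minus_unique add.right_inverse d_zero)
lemma s_diff: "\<sigma> (a - b) = \<sigma> a - \<sigma> b"
  using s_add[of a "-b"] s_minus[of b] by simp
lemma d_diff: "\<delta> (a - b) = \<delta> a - \<delta> b"
  using d_add[of a "-b"] d_minus[of b] by simp
lemma s_const[simp]: "\<sigma> [:c:] = [:c:]"
  using s_smult[of c 1] s_one by simp
lemma d_one[simp]: "\<delta> 1 = 0"
proof -
  have "\<delta> 1 = \<delta> 1 + \<delta> 1" using d_mult[of 1 1] s_one by simp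
  then show ?thesis by (metis add_cancel_right_right)
qed
lemma d_const[simp]: "\<delta> [:c:] = 0"
  using d_smult[of c 1] by simp

definition Yv :: "'a poly" where "Yv = \<sigma> [:0,1:]"

lemma s_pcomp: "\<sigma> f = pcompose f Yv"
proof (induct f)
  case 0 then show ?case by simp
next
  case (pCons a p)
  have e: "pCons a p = [:a:] + [:0,1:] * p" by simp
  have "\<sigma> (pCons a p) = \<sigma> ([:a:] + [:0,1:] * p)" using e by (rule arg_cong)
  also have "\<dots> = \<sigma> [:a:] + \<sigma> [:0,1:] * \<sigma> p"
    by (simp only: s_add s_mult)
  also have "\<dots> = [:a:] + Yv * \<sigma> p"
    by (simp only: s_const Yv_def)
  finally have "\<sigma> (pCons a p) = [:a:] + Yv * \<sigma> p" .
  then show ?case using pCons by (simp add: pcompose_pCons)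
qed

lemma s_pow_pcomp: "(\<sigma>^^m) f = pcompose f ((\<sigma>^^m) [:0,1:])"
proof (induct m arbitrary: f)
  case 0 then show ?case by simp
next
  case (Suc m)
  have "(\<sigma>^^Suc m) f = \<sigma> ((\<sigma>^^m) f)" by simp
  also have "\<dots> = pcompose ((\<sigma>^^m) f) Yv" by (rule s_pcomp)
  also have "\<dots> = pcompose (pcompose f ((\<sigma>^^m) [:0,1:])) Yv" using Suc[of f] by simp
  also have "\<dots> = pcompose f (pcompose ((\<sigma>^^m) [:0,1:]) Yv)" by (simp add: pcompose_assoc)
  also have "pcompose ((\<sigma>^^m) [:0,1:]) Yv = (\<sigma>^^Suc m) [:0,1:]"
    using s_pcomp[of "(\<sigma>^^m) [:0,1:]"] by simp
  finally show ?case .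
qed

lemma deg_Yv: "degree ((\<sigma>^^m) [:0,1:]) = degree Yv ^ m"
proof (induct m)
  case 0 then show ?case by simp
next
  case (Suc m)
  have "(\<sigma>^^Suc m) [:0,1:] = \<sigma> ((\<sigma>^^m) [:0,1:])" by simp
  also have "\<dots> = pcompose ((\<sigma>^^m) [:0,1:]) Yv" by (rule s_pcomp)
  finally show ?case using Suc by (simp add: degree_pcompose)
qed

lemma deg_s_pow: "degree ((\<sigma>^^m) f) = degree f * degree Yv ^ m"
  by (subst s_pow_pcomp) (simp add: degree_pcompose deg_Yv)

lemma degYv: "degree Yv > 1" using degs unfolding Yv_def .

lemma s_pow_eq0: "(\<sigma>^^m) f = 0 \<longleftrightarrow> f = 0"
proof -
  have "degree ((\<sigma>^^m) [:0,1:]) > 0" using deg_Yv degYv by simp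
  then show ?thesis by (subst s_pow_pcomp) (simp add: pcompose_eq_0_iff)
qed

lemma s_pow_diff: "(\<sigma>^^m) (a - b) = (\<sigma>^^m) a - (\<sigma>^^m) b"
  by (induct m) (simp_all add: s_diff)
lemma s_pow_smult: "(\<sigma>^^m) (smult c a) = smult c ((\<sigma>^^m) a)"
  by (induct m) (simp_all add: s_smult)
lemma s_pow_mult: "(\<sigma>^^m) (a * b) = (\<sigma>^^m) a * (\<sigma>^^m) b"
  by (induct m) (simp_all add: s_mult)

end


context ore begin

abbreviation xm where "xm \<equiv> ore_xmul \<sigma> \<delta>"
abbreviation om where "om \<equiv> ore_mult \<sigma> \<delta>"

lemma coeff_xm: "coeff (xm Q) i = (case i of 0 \<Rightarrow> 0 | Suc j \<Rightarrow> \<sigma> (coeff Q j)) + \<delta> (coeff Q i)"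
  unfolding ore_xmul_def by (simp add: coeff_map_poly coeff_pCons split: nat.split)

lemma xm_add: "xm (Q1 + Q2) = xm Q1 + xm Q2"
  by (rule poly_eqI) (simp add: coeff_xm s_add d_add algebra_simps split: nat.split)

lemma xm_0[simp]: "xm 0 = 0"
  by (rule poly_eqI) (simp add: coeff_xm split: nat.split)

lemma xm_minus: "xm (- Q) = - xm Q"
  using xm_add[of Q "-Q"] by (metis minus_unique add.right_inverse xm_0)

lemma xm_diff: "xm (Q1 - Q2) = xm Q1 - xm Q2"
  using xm_add[of Q1 "-Q2"] xm_minus[of Q2] by simp

lemma xm_smult: "xm (smult r Q) = smult (\<sigma> r) (xm Q) + smult (\<delta> r) Q"
  by (rule poly_eqI) (simp add: coeff_xm s_mult d_mult algebra_simps split: nat.split)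

lemma xm_pCons: "xm (pCons a Q) = pCons (\<delta> a) ([:\<sigma> a:] + xm Q)"
  by (rule poly_eqI) (simp add: coeff_xm coeff_pCons split: nat.split)

lemma xm_pCons0: "xm (pCons 0 W) = pCons 0 (xm W)"
  using xm_pCons[of 0 W] by simp

lemma om_sum:
  assumes "degree P \<le> N"
  shows "om P Q = (\<Sum>i\<le>N. smult (coeff P i) ((xm^^i) Q))"
proof -
  have "om P Q = (\<Sum>i\<le>degree P. smult (coeff P i) ((xm^^i) Q))"
    unfolding ore_mult_def by (simp add: smult_conv_map_poly)
  also have "\<dots> = (\<Sum>i\<le>N. smult (coeff P i) ((xm^^i) Q))"
    by (rule sum.mono_neutral_left) (use assms in \<open>auto simp: coeff_eq_0\<close>)
  finally show ?thesis .
qed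

lemma om_0[simp]: "om 0 Q = 0"
  by (subst om_sum[of 0 0]) simp_all

lemma om_pCons: "om (pCons a P) Q = smult a Q + om P (xm Q)"
proof -
  have "om (pCons a P) Q = (\<Sum>i\<le>Suc (degree P). smult (coeff (pCons a P) i) ((xm^^i) Q))"
    by (rule om_sum) (simp add: degree_pCons_le)
  also have "\<dots> = smult a Q + (\<Sum>i\<le>degree P. smult (coeff P i) ((xm^^Suc i) Q))"
    by (subst sum.atMost_Suc_shift) simp
  also have "(\<Sum>i\<le>degree P. smult (coeff P i) ((xm^^Suc i) Q)) = om P (xm Q)"
    by (subst om_sum[of P "degree P"]) (simp_all add: funpow_Suc_right del: funpow.simps)
  finally show ?thesis .
qed

lemma om_add_left: "om (P1 + P2) Q = om P1 Q + om P2 Q"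
proof (induct P1 P2 arbitrary: Q rule: poly_induct2)
  case 0 then show ?case by simp
next
  case (pCons a p b q)
  then show ?case by (simp add: om_pCons smult_add_left algebra_simps)
qed

lemma om_add_right: "om P (Q1 + Q2) = om P Q1 + om P Q2"
proof (induct P arbitrary: Q1 Q2)
  case 0 then show ?case by simp
next
  case (pCons a p)
  then show ?case by (simp add: om_pCons smult_add_right xm_add algebra_simps)
qed

lemma om_0_right[simp]: "om P 0 = 0"
  by (induct P) (simp_all add: om_pCons)

lemma om_minus_left: "om (- P) Q = - om P Q"
  using om_add_left[of P "-P" Q] by (metis minus_unique add.right_inverse om_0)
lemma om_minus_right: "om P (- Q) = - om P Q"
  using om_add_right[of P Q "-Q"] by (metis minus_unique add.right_inverse om_0_right)
lemma om_diff_left: "om (P1 - P2) Q = om P1 Q - om P2 Q"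
  using om_add_left[of P1 "-P2" Q] om_minus_left[of P2 Q] by simp
lemma om_diff_right: "om P (Q1 - Q2) = om P Q1 - om P Q2"
  using om_add_right[of P Q1 "-Q2"] om_minus_right[of P Q2] by simp

lemma om_smult_left: "om (smult r P) Q = smult r (om P Q)"
proof (induct P arbitrary: Q)
  case 0 then show ?case by simp
next
  case (pCons a p)
  then show ?case by (simp add: om_pCons smult_add_right)
qed

lemma xm_om: "xm (om Q W) = om (xm Q) W"
proof (induct Q arbitrary: W)
  case 0 then show ?case by simp
next
  case (pCons a p)
  have "xm (om (pCons a p) W) = smult (\<sigma> a) (xm W) + smult (\<delta> a) W + om (xm p) (xm W)"
    by (simp add: om_pCons xm_add xm_smult pCons)
  also have "\<dots> = om (xm (pCons a p)) W"
    by (simp add: xm_pCons om_pCons om_add_left algebra_simps)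
  finally show ?case .
qed

lemma om_assoc: "om (om P Q) W = om P (om Q W)"
proof (induct P arbitrary: Q)
  case 0 then show ?case by simp
next
  case (pCons a p)
  then show ?case by (simp add: om_pCons om_add_left om_smult_left xm_om)
qed

end


context ore begin

lemma xm_smult_k: "\<sigma> k = k \<Longrightarrow> \<delta> k = 0 \<Longrightarrow> xm (smult k W) = smult k (xm W)"
  by (simp add: xm_smult)

lemma om_smult_right_k: "\<sigma> k = k \<Longrightarrow> \<delta> k = 0 \<Longrightarrow> om Q (smult k W) = smult k (om Q W)"
proof (induct Q arbitrary: W)
  case 0 then show ?case by simp
next
  case (pCons a p)
  then show ?case by (simp add: om_pCons xm_smult_k smult_add_right mult.commute)
qed

lemma om_pCons0_right: "om Q (pCons 0 W) = pCons 0 (om Q W)"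
proof (induct Q arbitrary: W)
  case 0 then show ?case by simp
next
  case (pCons a p)
  then show ?case by (simp add: om_pCons xm_pCons0)
qed

lemma xm_1: "xm 1 = pCons 0 1"
  by (rule poly_eqI) (simp add: coeff_xm s_one coeff_pCons split: nat.split)

lemma om_1_right[simp]: "om Q 1 = Q"
proof (induct Q)
  case 0 then show ?case by simp
next
  case (pCons a p)
  then show ?case by (simp add: om_pCons xm_1 om_pCons0_right)
qed

lemma om_const_left: "om [:k:] Q = smult k Q"
  by (simp add: om_pCons)

lemma om_1_left[simp]: "om 1 Q = Q"
proof -
  have h: "om (pCons 1 0) Q = Q" by (simp only: om_pCons om_0 add_0_right smult_1_left)
  show ?thesis by (subst one_pCons) (rule h)
qed

abbreviation cst :: "'a \<Rightarrow> 'a poly poly" where "cst c \<equiv> [:[:c:]:]"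

lemma om_cst_left: "om (cst c) Q = smult [:c:] Q"
  by (rule om_const_left)

lemma om_cst_right: "om Q (cst c) = smult [:c:] Q"
proof -
  have "cst c = smult [:c:] 1" by simp
  then show ?thesis using om_smult_right_k[of "[:c:]" Q 1] by simp
qed

lemma cst_central: "om (cst c) Q = om Q (cst c)"
  by (simp add: om_cst_left om_cst_right)

lemma xm_lead:
  assumes "Q \<noteq> 0"
  shows "degree (xm Q) = Suc (degree Q) \<and> lead_coeff (xm Q) = \<sigma> (lead_coeff Q)"
proof -
  have nz: "\<sigma> (lead_coeff Q) \<noteq> 0" using s_pow_eq0[of 1 "lead_coeff Q"] assms by simp
  have c: "coeff (xm Q) (Suc (degree Q)) = \<sigma> (lead_coeff Q)"
    by (simp only: coeff_xm nat.case coeff_eq_0[of Q "Suc (degree Q)"] lessI d_zero add_0_right)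
  have "degree (xm Q) \<le> Suc (degree Q)"
  proof (rule degree_le, intro allI impI)
    fix i assume "Suc (degree Q) < i"
    then obtain j where "i = Suc j" "degree Q < j" by (cases i) auto
    then show "coeff (xm Q) i = 0" by (simp add: coeff_xm coeff_eq_0)
  qed
  moreover have "Suc (degree Q) \<le> degree (xm Q)" using c nz by (metis le_degree)
  ultimately have d: "degree (xm Q) = Suc (degree Q)" by simp
  then show ?thesis using c by simp
qed

lemma xm_nz: "Q \<noteq> 0 \<Longrightarrow> xm Q \<noteq> 0"
  using xm_lead[of Q] s_pow_eq0[of 1 "lead_coeff Q"] by auto

lemma om_lead:
  assumes "P \<noteq> 0" "Q \<noteq> 0"
  shows "om P Q \<noteq> 0 \<and> degree (om P Q) = degree P + degree Q \<and>
         lead_coeff (om P Q) = lead_coeff P * (\<sigma>^^degree P) (lead_coeff Q)"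
  using assms
proof (induct P arbitrary: Q)
  case 0 then show ?case by simp
next
  case (pCons a p)
  show ?case
  proof (cases "p = 0")
    case True
    then have "a \<noteq> 0" using pCons(3) by simp
    then show ?thesis using True pCons(4) by (simp add: om_pCons)
  next
    case False
    have xq: "xm Q \<noteq> 0" using xm_nz pCons(4) by simp
    have IH: "om p (xm Q) \<noteq> 0 \<and> degree (om p (xm Q)) = degree p + degree (xm Q) \<and>
         lead_coeff (om p (xm Q)) = lead_coeff p * (\<sigma>^^degree p) (lead_coeff (xm Q))"
      using pCons(2)[OF False xq] .
    have dx: "degree (xm Q) = Suc (degree Q)" and lx: "lead_coeff (xm Q) = \<sigma> (lead_coeff Q)"
      using xm_lead[OF pCons(4)] by auto
    have lt: "degree (smult a Q) < degree (om p (xm Q))"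
      using IH dx degree_smult_le[of a Q] by linarith
    have E: "om (pCons a p) Q = smult a Q + om p (xm Q)" by (rule om_pCons)
    have D: "degree (smult a Q + om p (xm Q)) = degree (om p (xm Q))"
      using lt by (rule degree_add_eq_right)
    have L: "lead_coeff (smult a Q + om p (xm Q)) = lead_coeff (om p (xm Q))"
      using lt by (rule lead_coeff_add_le)
    have S: "(\<sigma>^^degree p) (\<sigma> x) = (\<sigma>^^Suc (degree p)) x" for x
      by (simp only: funpow_Suc_right o_apply)
    have e1: "degree (pCons a p) = Suc (degree p)" by (rule degree_pCons_eq[OF False])
    have e2: "lead_coeff (pCons a p) = lead_coeff p" using False by simp
    have dd: "degree (om (pCons a p) Q) = degree (pCons a p) + degree Q"
      using E D IH dx e1 by simp
    have nz: "om (pCons a p) Q \<noteq> 0"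
    proof
      assume "om (pCons a p) Q = 0"
      then have "degree (om (pCons a p) Q) = 0" by simp
      then show False using dd e1 by simp
    qed
    have "lead_coeff (om (pCons a p) Q) = lead_coeff (om p (xm Q))"
      using E L by (simp only:)
    also have "\<dots> = lead_coeff p * (\<sigma>^^degree p) (lead_coeff (xm Q))"
      using IH by blast
    also have "\<dots> = lead_coeff p * (\<sigma>^^degree p) (\<sigma> (lead_coeff Q))"
      by (simp only: lx)
    also have "\<dots> = lead_coeff (pCons a p) * (\<sigma>^^degree (pCons a p)) (lead_coeff Q)"
      using S e1 e2 by simp
    finally show ?thesis using nz dd by blast
  qed
qed

lemma om_nz: "P \<noteq> 0 \<Longrightarrow> Q \<noteq> 0 \<Longrightarrow> om P Q \<noteq> 0"
  using om_lead by blast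

lemma om_deg: "P \<noteq> 0 \<Longrightarrow> Q \<noteq> 0 \<Longrightarrow> degree (om P Q) = degree P + degree Q"
  using om_lead by blast

lemma om_cancel_right: "om A H = om B H \<Longrightarrow> H \<noteq> 0 \<Longrightarrow> A = B"
  using om_nz[of "A - B" H] by (auto simp: om_diff_left)

end


lemma nat_cancel_aux:
  fixes x y c :: nat
  assumes "x * c + y = y * c + x" "c > 1"
  shows "x = y"
proof (rule ccontr)
  assume ne: "x \<noteq> y"
  have "int x * int c + int y = int y * int c + int x" using assms(1) by (metis of_nat_add of_nat_mult)
  then have "(int x - int y) * (int c - 1) = 0" by (simp add: algebra_simps)
  then show False using ne assms(2) by simp
qed

context ore begin

lemma lc_rel:
  assumes "P \<noteq> 0" "Q \<noteq> 0" "om P Q = om Q P"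
  shows "lead_coeff P * (\<sigma>^^degree P) (lead_coeff Q) = lead_coeff Q * (\<sigma>^^degree Q) (lead_coeff P)"
proof -
  have "lead_coeff (om P Q) = lead_coeff P * (\<sigma>^^degree P) (lead_coeff Q)"
    using om_lead[OF assms(1,2)] by blast
  moreover have "lead_coeff (om Q P) = lead_coeff Q * (\<sigma>^^degree Q) (lead_coeff P)"
    using om_lead[OF assms(2,1)] by blast
  ultimately show ?thesis using assms(3) by simp
qed

lemma ydeg_rel:
  assumes "p \<noteq> 0" "q \<noteq> 0" "p * (\<sigma>^^n) q = q * (\<sigma>^^m) p"
  shows "degree p + degree q * degree Yv ^ n = degree q + degree p * degree Yv ^ m"
proof -
  have "degree (p * (\<sigma>^^n) q) = degree (q * (\<sigma>^^m) p)" using assms(3) by simp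
  moreover have "(\<sigma>^^n) q \<noteq> 0" "(\<sigma>^^m) p \<noteq> 0" using assms s_pow_eq0 by auto
  ultimately show ?thesis using assms(1,2) by (simp add: degree_mult_eq deg_s_pow)
qed

lemma one_dim_y:
  assumes n: "n \<ge> 1" and p: "p \<noteq> 0"
    and q1: "q1 \<noteq> 0" "p * (\<sigma>^^n) q1 = q1 * (\<sigma>^^m) p"
    and q2: "q2 \<noteq> 0" "p * (\<sigma>^^n) q2 = q2 * (\<sigma>^^m) p"
  shows "\<exists>lam. q1 = smult lam q2"
proof -
  have c1: "degree Yv ^ n > 1" using degYv n by (metis one_less_power less_le_trans le_refl not_one_le_zero less_one linorder_not_le)
  have samedeg: "degree r = degree q1" if r: "r \<noteq> 0" "p * (\<sigma>^^n) r = r * (\<sigma>^^m) p" for r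
  proof -
    have "degree p + degree r * degree Yv ^ n = degree r + degree p * degree Yv ^ m"
      by (rule ydeg_rel[OF p r])
    moreover have "degree p + degree q1 * degree Yv ^ n = degree q1 + degree p * degree Yv ^ m"
      by (rule ydeg_rel[OF p q1])
    ultimately have "degree r * degree Yv ^ n + degree q1 = degree q1 * degree Yv ^ n + degree r"
      by linarith
    then show ?thesis using c1 by (rule nat_cancel_aux)
  qed
  have d2: "degree q2 = degree q1" by (rule samedeg[OF q2])
  define lam where "lam = lead_coeff q1 / lead_coeff q2"
  define r where "r = q1 - smult lam q2"
  have lc2: "lead_coeff q2 \<noteq> 0" using q2 by simp
  have rrel: "p * (\<sigma>^^n) r = r * (\<sigma>^^m) p"
    unfolding r_def using q1(2) q2(2) by (simp add: s_pow_diff s_pow_smult algebra_simps)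
  have cr: "coeff r (degree q1) = 0"
    unfolding r_def lam_def using d2 lc2 by simp
  have "r = 0"
  proof (rule ccontr)
    assume "r \<noteq> 0"
    then have "degree r = degree q1" using samedeg rrel by blast
    then have "lead_coeff r = 0" using cr by simp
    then show False using \<open>r \<noteq> 0\<close> by simp
  qed
  then show ?thesis unfolding r_def by auto
qed

definition cent :: "'a poly poly \<Rightarrow> 'a poly poly set" where
  "cent P = {Q. om P Q = om Q P}"

lemma cent_eq: "ore_centralizer \<sigma> \<delta> P = cent P"
  unfolding cent_def ore_centralizer_def by simp

lemma one_dim:
  assumes n: "degree P \<ge> 1"
    and Q1: "Q1 \<in> cent P" "Q1 \<noteq> 0" and Q2: "Q2 \<in> cent P" "Q2 \<noteq> 0"
    and d: "degree Q1 = degree Q2"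
  shows "\<exists>lam. Q1 - smult [:lam:] Q2 = 0 \<or> degree (Q1 - smult [:lam:] Q2) < degree Q1"
proof -
  have P0: "P \<noteq> 0" using n by auto
  have r1: "lead_coeff P * (\<sigma>^^degree P) (lead_coeff Q1) = lead_coeff Q1 * (\<sigma>^^degree Q1) (lead_coeff P)"
    using lc_rel[OF P0 Q1(2)] Q1(1) unfolding cent_def by simp
  have r2: "lead_coeff P * (\<sigma>^^degree P) (lead_coeff Q2) = lead_coeff Q2 * (\<sigma>^^degree Q1) (lead_coeff P)"
    using lc_rel[OF P0 Q2(2)] Q2(1) d unfolding cent_def by simp
  obtain lam where l: "lead_coeff Q1 = smult lam (lead_coeff Q2)"
    using one_dim_y[OF n _ _ r1 _ r2] P0 Q1(2) Q2(2) by auto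
  define R where "R = Q1 - smult [:lam:] Q2"
  have cR: "coeff R (degree Q1) = 0" unfolding R_def using l d by simp
  have dR: "degree R \<le> degree Q1" unfolding R_def using d
    by (metis degree_diff_le degree_smult_le le_trans order_refl)
  have "R = 0 \<or> degree R < degree Q1"
  proof (rule ccontr)
    assume "\<not> (R = 0 \<or> degree R < degree Q1)"
    then have "R \<noteq> 0" "degree R = degree Q1" using dR by auto
    then have "lead_coeff R = 0" using cR by simp
    then show False using \<open>R \<noteq> 0\<close> by simp
  qed
  then show ?thesis unfolding R_def by blast
qed

lemma deg0_case:
  assumes P0: "degree P = 0" and Pn: "P \<notin> range (\<lambda>c. [:[:c:]:])"
    and Q: "Q \<in> cent P" "Q \<noteq> 0"
  shows "degree Q = 0"
proof -
  obtain p where Pp: "P = [:p:]" using P0 by (metis degree_eq_zeroE)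
  have p0: "degree p \<ge> 1"
  proof (rule ccontr)
    assume "\<not> degree p \<ge> 1"
    then have "degree p = 0" by simp
    then obtain c where "p = [:c:]" by (metis degree_eq_zeroE)
    then show False using Pn Pp by auto
  qed
  then have pnz: "p \<noteq> 0" by auto
  have "P \<noteq> 0" using pnz Pp by simp
  then have "lead_coeff P * (\<sigma>^^degree P) (lead_coeff Q) = lead_coeff Q * (\<sigma>^^degree Q) (lead_coeff P)"
    using lc_rel Q unfolding cent_def by simp
  then have "p * lead_coeff Q = lead_coeff Q * (\<sigma>^^degree Q) p" using Pp by simp
  then have "(\<sigma>^^degree Q) p = p" using Q(2) by (simp add: mult.commute)
  then have "degree p * degree Yv ^ degree Q = degree p" using deg_s_pow by metis
  then have "degree Yv ^ degree Q = 1" using p0 by simp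
  then show ?thesis using degYv by (metis one_less_power less_irrefl neq0_conv)
qed

end


definition orb :: "nat \<Rightarrow> nat \<Rightarrow> nat set" where
  "orb n a = {(i * a) mod n | i. True}"

lemma orb_sub: "n > 0 \<Longrightarrow> orb n a \<subseteq> {..<n}"
  unfolding orb_def by auto

lemma orb_fin: "n > 0 \<Longrightarrow> finite (orb n a)"
  using orb_sub finite_subset by blast

lemma orb_mem: "(i * a) mod n \<in> orb n a"
  unfolding orb_def by blast

lemma orb_combine:
  assumes n: "n > 0"
  shows "\<exists>u v. orb n a \<subseteq> orb n (u*a+v*b) \<and> b mod n \<in> orb n (u*a+v*b)"
proof (cases "a = 0")
  case True
  have "orb n a \<subseteq> orb n (0*a+1*b)"
    unfolding orb_def True using orb_mem[of 0 b n] by (auto simp: orb_def)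
  moreover have "b mod n \<in> orb n (0*a+1*b)" using orb_mem[of 1 b n] by simp
  ultimately show ?thesis by blast
next
  case False
  obtain x y where xy: "a * x = b * y + gcd a b" using bezout_nat[OF False] by blast
  define g where "g = gcd a b"
  define c where "c = a * x + b * y * (n - 1)"
  have c1: "c = b * y + g + b * y * (n - 1)" unfolding c_def g_def using xy by simp
  have c2: "b * y + b * y * (n - 1) = b * y * n" using n by (cases n) (simp_all add: algebra_simps)
  have "c = g + b * y * n" using c1 c2 by simp
  then have cg: "c mod n = g mod n" by simp
  have key: "(k * g) mod n = (k * c) mod n" for k
  proof -
    have "(k*g) mod n = (k*(g mod n)) mod n" by (simp add: mod_mult_right_eq)
    also have "\<dots> = (k*(c mod n)) mod n" by (simp only: cg)
    also have "\<dots> = (k*c) mod n" by (simp add: mod_mult_right_eq)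
    finally show ?thesis .
  qed
  have "orb n a \<subseteq> orb n c"
  proof
    fix z assume "z \<in> orb n a"
    then obtain i where z: "z = (i * a) mod n" unfolding orb_def by blast
    have "a = (a div g) * g" unfolding g_def by simp
    then have e: "i * a = (i * (a div g)) * g" by (metis mult.assoc)
    have "z = ((i * (a div g)) * g) mod n" using z e by (simp only:)
    also have "\<dots> = ((i * (a div g)) * c) mod n" by (rule key)
    finally have "z = ((i * (a div g)) * c) mod n" .
    then show "z \<in> orb n c" using orb_mem by metis
  qed
  moreover have "b mod n \<in> orb n c"
  proof -
    have "b = (b div g) * g" unfolding g_def by simp
    then have "b mod n = ((b div g) * c) mod n" using key by metis
    then show ?thesis using orb_mem by metis
  qed
  moreover have "c = x * a + (y * (n - 1)) * b" unfolding c_def by (simp add: algebra_simps)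
  ultimately show ?thesis by metis
qed

lemma choose_gen:
  fixes D :: "nat set"
  assumes n: "n > 0" and a0: "a0 \<in> D" and z: "0 \<in> D"
    and cl: "\<And>x y. x \<in> D \<Longrightarrow> y \<in> D \<Longrightarrow> x + y \<in> D"
  shows "\<exists>a\<in>D. \<forall>b\<in>D. \<exists>i<n. b mod n = (i * a) mod n"
proof -
  have mul: "k * x \<in> D" if x: "x \<in> D" for k x :: nat
  proof (induct k)
    case 0 then show ?case using z by simp
  next
    case (Suc k) then show ?case using cl[OF x] by simp
  qed
  have bd: "\<forall>y. y \<in> D \<longrightarrow> card (orb n y) < Suc n"
  proof (intro allI impI)
    fix y
    have "card (orb n y) \<le> card {..<n}" by (rule card_mono[OF finite_lessThan orb_sub[OF n]])
    then show "card (orb n y) < Suc n" by simp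
  qed
  obtain a where a: "a \<in> D" and amax: "\<forall>y. y \<in> D \<longrightarrow> card (orb n y) \<le> card (orb n a)"
    using Lattices_Big.ex_has_greatest_nat[of "\<lambda>x. x \<in> D" a0 "\<lambda>y. card (orb n y)" "Suc n", OF a0 bd]
    by blast
  have "\<forall>b\<in>D. \<exists>i<n. b mod n = (i * a) mod n"
  proof
    fix b assume b: "b \<in> D"
    obtain u v where uv: "orb n a \<subseteq> orb n (u*a+v*b)" "b mod n \<in> orb n (u*a+v*b)"
      using orb_combine[OF n] by blast
    have cD: "u*a+v*b \<in> D" by (rule cl[OF mul[OF a] mul[OF b]])
    have "card (orb n (u*a+v*b)) \<le> card (orb n a)" using amax cD by simp
    moreover have "card (orb n a) \<le> card (orb n (u*a+v*b))"
      by (rule card_mono[OF orb_fin[OF n] uv(1)])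
    ultimately have "card (orb n a) = card (orb n (u*a+v*b))" by (rule antisym[rotated])
    then have "orb n a = orb n (u*a+v*b)"
      by (rule card_subset_eq[OF orb_fin[OF n] uv(1)])
    then have "b mod n \<in> orb n a" using uv(2) by simp
    then obtain i where i: "b mod n = (i * a) mod n" unfolding orb_def by blast
    have h: "((i mod n) * a) mod n = (i * a) mod n" by (simp add: mod_mult_left_eq)
    have lt: "i mod n < n" using n by simp
    have eq: "b mod n = ((i mod n) * a) mod n" by (simp only: i h)
    show "\<exists>i<n. b mod n = (i * a) mod n" using lt eq by blast
  qed
  then show ?thesis using a by blast
qed

lemma split_deg:
  fixes b a n i :: nat
  assumes "n > 0" "b mod n = (i * a) mod n" "i < n" "n * a \<le> b"
  shows "\<exists>j. b = i * a + j * n"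
proof -
  have "i * a \<le> n * a" using assms(3) by (simp add: mult_le_mono1)
  then have "i * a \<le> b" using assms(4) by linarith
  then have "n dvd b - i * a" using assms(2) mod_eq_dvd_iff_nat by blast
  then obtain j where "b - i * a = n * j" by blast
  moreover have "b = i * a + (b - i * a)" using \<open>i * a \<le> b\<close> by simp
  ultimately have "b = i * a + j * n" by (simp add: mult.commute)
  then show ?thesis by blast
qed


definition sc :: "'a::field \<Rightarrow> 'a poly poly \<Rightarrow> 'a poly poly" where
  "sc c u = smult [:c:] u"

lemma sc_add_left: "sc (a + b) u = sc a u + sc b u"
  unfolding sc_def by (metis add_pCons add_0 smult_add_left)
lemma sc_diff_right: "sc a (u - v) = sc a u - sc a v"
  unfolding sc_def by (rule smult_diff_right)
lemma sc_add_right: "sc a (u + v) = sc a u + sc a v"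
  unfolding sc_def by (rule smult_add_right)
lemma sc_sc: "sc a (sc b u) = sc (a * b) u"
  unfolding sc_def by (simp add: mult.commute)
lemma sc_0[simp]: "sc 0 u = 0"
  unfolding sc_def by simp
lemma sc_0_right[simp]: "sc a 0 = 0"
  unfolding sc_def by simp
lemma sc_1[simp]: "sc 1 u = u"
  unfolding sc_def by (simp add: one_pCons[symmetric])
lemma sc_minus: "sc (- a) u = - sc a u"
proof -
  have "[:-a:] = - [:a:]" by simp
  then show ?thesis unfolding sc_def by (simp only: smult_minus_left)
qed
lemma sc_sum_left: "sc (\<Sum>i\<in>S. f i) u = (\<Sum>i\<in>S. sc (f i) u)"
  by (induct S rule: infinite_finite_induct) (simp_all add: sc_add_left)
lemma sc_sum_right: "sc a (\<Sum>i\<in>S. f i) = (\<Sum>i\<in>S. sc a (f i))"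
  by (induct S rule: infinite_finite_induct) (simp_all add: sc_add_right)
lemma sum_diff_distrib': "(\<Sum>i\<in>S. f i - g i) = (\<Sum>i\<in>S. f i) - (\<Sum>i\<in>S. (g i :: 'b::ab_group_add))"
  by (simp add: sum_subtractf)
lemma degree_sc: "degree (sc a u) \<le> degree u"
  unfolding sc_def by (rule degree_smult_le)
lemma degree_sc_eq: "a \<noteq> 0 \<Longrightarrow> degree (sc a u) = degree u"
  unfolding sc_def by simp
lemma sc_eq0: "a \<noteq> 0 \<Longrightarrow> sc a u = 0 \<longleftrightarrow> u = 0"
  unfolding sc_def by simp

lemma dep:
  fixes V :: "'a::field poly poly set"
  assumes Vdiff: "\<And>u v. u \<in> V \<Longrightarrow> v \<in> V \<Longrightarrow> u - v \<in> V"
    and Vsc: "\<And>u c. u \<in> V \<Longrightarrow> sc c u \<in> V"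
    and onedim: "\<And>u v. u \<in> V \<Longrightarrow> v \<in> V \<Longrightarrow> u \<noteq> 0 \<Longrightarrow> v \<noteq> 0 \<Longrightarrow> degree u = degree v \<Longrightarrow>
                   \<exists>l. u - sc l v = 0 \<or> degree (u - sc l v) < degree u"
  shows "finite I \<Longrightarrow> card I > N \<Longrightarrow> (\<forall>j\<in>I. r j \<in> V \<and> (r j = 0 \<or> degree (r j) < N)) \<Longrightarrow>
         \<exists>c. (\<exists>j\<in>I. c j \<noteq> 0) \<and> (\<Sum>j\<in>I. sc (c j) (r j)) = 0"
proof (induct N arbitrary: I r)
  case 0
  then have "I \<noteq> {}" by auto
  then obtain j where "j \<in> I" by blast
  moreover have "(\<Sum>j\<in>I. sc 1 (r j)) = 0" using 0 by simp
  ultimately show ?case by (intro exI[of _ "\<lambda>_. 1"]) auto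
next
  case (Suc N)
  show ?case
  proof (cases "\<exists>k\<in>I. r k \<noteq> 0 \<and> degree (r k) = N")
    case False
    then have "\<forall>j\<in>I. r j \<in> V \<and> (r j = 0 \<or> degree (r j) < N)"
      using Suc.prems(3) by (metis less_SucE)
    then show ?thesis using Suc.hyps[of I r] Suc.prems(1,2) by simp
  next
    case True
    then obtain k where k: "k \<in> I" "r k \<noteq> 0" "degree (r k) = N" by blast
    have rkV: "r k \<in> V" using k Suc.prems(3) by blast
    define l where "l j = (if r j \<noteq> 0 \<and> degree (r j) = N
        then (SOME l. r j - sc l (r k) = 0 \<or> degree (r j - sc l (r k)) < N) else 0)" for j
    define r' where "r' j = r j - sc (l j) (r k)" for j
    have r'good: "r' j \<in> V \<and> (r' j = 0 \<or> degree (r' j) < N)" if j: "j \<in> I - {k}" for j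
    proof -
      have rjV: "r j \<in> V" using j Suc.prems(3) by blast
      have "r' j \<in> V" unfolding r'_def using Vdiff[OF rjV Vsc[OF rkV]] .
      moreover have "r' j = 0 \<or> degree (r' j) < N"
      proof (cases "r j \<noteq> 0 \<and> degree (r j) = N")
        case True
        then have ex: "\<exists>l. r j - sc l (r k) = 0 \<or> degree (r j - sc l (r k)) < N"
          using onedim[OF rjV rkV _ k(2)] k(3) by auto
        have leq: "l j = (SOME l. r j - sc l (r k) = 0 \<or> degree (r j - sc l (r k)) < N)"
          unfolding l_def using True by simp
        have "r j - sc (l j) (r k) = 0 \<or> degree (r j - sc (l j) (r k)) < N"
          unfolding leq by (rule someI_ex[OF ex])
        then show ?thesis unfolding r'_def .
      next
        case False
        then have "l j = 0" unfolding l_def by (rule if_not_P)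
        then have "r' j = r j" unfolding r'_def by simp
        moreover have "r j = 0 \<or> degree (r j) < Suc N" using j Suc.prems(3) by blast
        ultimately show ?thesis using False by auto
      qed
      ultimately show ?thesis by blast
    qed
    have fin: "finite (I - {k})" using Suc.prems(1) by simp
    have cd: "card (I - {k}) > N" using Suc.prems(1,2) k(1) by simp
    obtain c' where c': "\<exists>j\<in>I - {k}. c' j \<noteq> 0" "(\<Sum>j\<in>I - {k}. sc (c' j) (r' j)) = 0"
      using Suc.hyps[OF fin cd] r'good by blast
    define c where "c j = (if j = k then - (\<Sum>i\<in>I - {k}. c' i * l i) else c' j)" for j
    have nz: "\<exists>j\<in>I. c j \<noteq> 0" using c'(1) unfolding c_def by auto
    have "(\<Sum>j\<in>I - {k}. sc (c' j) (r' j)) =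
          (\<Sum>j\<in>I - {k}. sc (c' j) (r j)) - (\<Sum>j\<in>I - {k}. sc (c' j * l j) (r k))"
      unfolding r'_def by (simp add: sc_diff_right sc_sc sum_subtractf)
    also have "(\<Sum>j\<in>I - {k}. sc (c' j * l j) (r k)) = sc (\<Sum>j\<in>I - {k}. c' j * l j) (r k)"
      by (simp add: sc_sum_left)
    finally have e1: "(\<Sum>j\<in>I - {k}. sc (c' j) (r j)) = sc (\<Sum>j\<in>I - {k}. c' j * l j) (r k)"
      using c'(2) by simp
    have "(\<Sum>j\<in>I. sc (c j) (r j)) = sc (c k) (r k) + (\<Sum>j\<in>I - {k}. sc (c j) (r j))"
      using Suc.prems(1) k(1) by (simp add: sum.remove)
    also have "(\<Sum>j\<in>I - {k}. sc (c j) (r j)) = (\<Sum>j\<in>I - {k}. sc (c' j) (r j))"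
      unfolding c_def by (rule sum.cong) auto
    also have "sc (c k) (r k) = - sc (\<Sum>j\<in>I - {k}. c' j * l j) (r k)"
      unfolding c_def by (simp add: sc_minus)
    finally have "(\<Sum>j\<in>I. sc (c j) (r j)) = 0" using e1 by simp
    then show ?thesis using nz by blast
  qed
qed


context ore begin

lemma om_sc_left: "om (sc c u) v = sc c (om u v)"
  unfolding sc_def by (rule om_smult_left)
lemma om_sc_right: "om u (sc c v) = sc c (om u v)"
  unfolding sc_def by (rule om_smult_right_k) simp_all
lemma sc_om: "sc c u = om (cst c) u"
  unfolding sc_def by (simp add: om_cst_left)

lemma om_sum_right: "om u (\<Sum>i\<in>S. f i) = (\<Sum>i\<in>S. om u (f i))"
  by (induct S rule: infinite_finite_induct) (simp_all add: om_add_right)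

lemma cm_add: "om v a = om a v \<Longrightarrow> om v b = om b v \<Longrightarrow> om v (a + b) = om (a + b) v"
  by (simp add: om_add_left om_add_right)
lemma cm_diff: "om v a = om a v \<Longrightarrow> om v b = om b v \<Longrightarrow> om v (a - b) = om (a - b) v"
  by (simp add: om_diff_left om_diff_right)
lemma cm_mult: "om v a = om a v \<Longrightarrow> om v b = om b v \<Longrightarrow> om v (om a b) = om (om a b) v"
  by (metis om_assoc)
lemma cm_sc: "om v a = om a v \<Longrightarrow> om v (sc c a) = om (sc c a) v"
  by (simp add: om_sc_left om_sc_right)

lemma cent_diff: "a \<in> cent P \<Longrightarrow> b \<in> cent P \<Longrightarrow> a - b \<in> cent P"
  unfolding cent_def using cm_diff by blast
lemma cent_mult: "a \<in> cent P \<Longrightarrow> b \<in> cent P \<Longrightarrow> om a b \<in> cent P"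
  unfolding cent_def using cm_mult by blast
lemma cent_sc: "a \<in> cent P \<Longrightarrow> sc c a \<in> cent P"
  unfolding cent_def using cm_sc by blast
lemma cent_1: "1 \<in> cent P"
  unfolding cent_def by simp
lemma cent_self: "P \<in> cent P"
  unfolding cent_def by simp

definition pw :: "'a poly poly \<Rightarrow> nat \<Rightarrow> 'a poly poly" where
  "pw A k = ((\<lambda>X. om A X)^^k) 1"

lemma pw_0[simp]: "pw A 0 = 1" unfolding pw_def by simp
lemma pw_Suc: "pw A (Suc k) = om A (pw A k)" unfolding pw_def by simp

lemma pw_deg: "A \<noteq> 0 \<Longrightarrow> pw A k \<noteq> 0 \<and> degree (pw A k) = k * degree A"
proof (induct k)
  case 0 then show ?case by simp
next
  case (Suc k)
  then show ?case using om_lead[of A "pw A k"] by (simp add: pw_Suc)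
qed

lemma pw_cent: "A \<in> cent P \<Longrightarrow> pw A k \<in> cent P"
  by (induct k) (simp_all add: pw_Suc cent_1 cent_mult)

inductive_set FF :: "'a poly poly \<Rightarrow> 'a poly poly \<Rightarrow> 'a poly poly set" for A P where
  F_cst: "cst c \<in> FF A P"
| F_A: "A \<in> FF A P"
| F_P: "P \<in> FF A P"
| F_add: "u \<in> FF A P \<Longrightarrow> v \<in> FF A P \<Longrightarrow> u + v \<in> FF A P"
| F_mul: "u \<in> FF A P \<Longrightarrow> v \<in> FF A P \<Longrightarrow> om u v \<in> FF A P"

lemma F_0: "0 \<in> FF A P"
  using F_cst[of 0 A P] by simp
lemma F_1: "1 \<in> FF A P"
  using F_cst[of 1 A P] by (simp add: one_pCons)
lemma F_sc: "u \<in> FF A P \<Longrightarrow> sc c u \<in> FF A P"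
  by (simp add: sc_om F_mul F_cst)
lemma F_pw: "u \<in> FF A P \<Longrightarrow> pw u k \<in> FF A P"
  by (induct k) (simp_all add: pw_Suc F_1 F_mul)
lemma F_sum: "(\<And>i. i \<in> S \<Longrightarrow> f i \<in> FF A P) \<Longrightarrow> (\<Sum>i\<in>S. f i) \<in> FF A P"
  by (induct S rule: infinite_finite_induct) (simp_all add: F_0 F_add)

lemma FF_comm_gen:
  assumes "om A v = om v A" "om P v = om v P" "u \<in> FF A P"
  shows "om u v = om v u"
  using assms(3)
proof (induct u rule: FF.induct)
  case (F_cst c) then show ?case by (rule cst_central)
next
  case F_A then show ?case using assms(1) .
next
  case F_P then show ?case using assms(2) .
next
  case (F_add u w) then show ?case by (simp add: om_add_left om_add_right)
next
  case (F_mul u w) then show ?case by (metis om_assoc)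
qed

lemma FF_comm:
  assumes AP: "om A P = om P A" and u: "u \<in> FF A P" and v: "v \<in> FF A P"
  shows "om u v = om v u"
proof -
  have vA: "om v A = om A v" by (rule FF_comm_gen[OF refl AP[symmetric] v])
  have vP: "om v P = om P v" by (rule FF_comm_gen[OF AP refl v])
  show ?thesis by (rule FF_comm_gen[OF vA[symmetric] vP[symmetric] u])
qed

lemma FF_cent:
  assumes A: "A \<in> cent P" and u: "u \<in> FF A P"
  shows "u \<in> cent P"
proof -
  have "om A P = om P A" using A unfolding cent_def by simp
  then have "om u P = om P u" by (rule FF_comm_gen[OF _ refl u])
  then show ?thesis unfolding cent_def by simp
qed

end


context ore begin

lemma decomp:
  assumes n: "degree P \<ge> 1" and A: "A \<in> cent P" "A \<noteq> 0"
    and gen: "\<forall>Q\<in>cent P. Q \<noteq> 0 \<longrightarrow> (\<exists>i<degree P. degree Q mod degree P = (i * degree A) mod degree P)"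
  shows "X \<in> cent P \<Longrightarrow> \<exists>e\<in>FF A P. X - e = 0 \<or> degree (X - e) < degree P * degree A"
proof (induct "degree X" arbitrary: X rule: less_induct)
  case less
  show ?case
  proof (cases "X = 0 \<or> degree X < degree P * degree A")
    case True then show ?thesis using F_0 by (intro bexI[of _ 0]) auto
  next
    case False
    then have X0: "X \<noteq> 0" and big: "degree P * degree A \<le> degree X" by auto
    obtain i where i: "i < degree P" "degree X mod degree P = (i * degree A) mod degree P"
      using gen less.prems X0 by blast
    obtain j where j: "degree X = i * degree A + j * degree P"
      using split_deg[of "degree P" "degree X" i "degree A"] i big n by auto
    define E where "E = om (pw A i) (pw P j)"
    have P0: "P \<noteq> 0" using n by auto
    have EF: "E \<in> FF A P" unfolding E_def by (intro F_mul F_pw F_A F_P)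
    have Ec: "E \<in> cent P" by (rule FF_cent[OF A(1) EF])
    have pa: "pw A i \<noteq> 0" "degree (pw A i) = i * degree A" using pw_deg[OF A(2)] by auto
    have pp: "pw P j \<noteq> 0" "degree (pw P j) = j * degree P" using pw_deg[OF P0] by auto
    have E0: "E \<noteq> 0" unfolding E_def using om_nz pa pp by blast
    have dE: "degree E = degree X" unfolding E_def using om_deg[OF pa(1) pp(1)] pa pp j by simp
    obtain lam where lam: "X - smult [:lam:] E = 0 \<or> degree (X - smult [:lam:] E) < degree X"
      using one_dim[OF n less.prems X0 Ec E0] dE by auto
    define X1 where "X1 = X - sc lam E"
    have X1c: "X1 \<in> cent P" unfolding X1_def by (rule cent_diff[OF less.prems cent_sc[OF Ec]])
    have eF: "sc lam E \<in> FF A P" by (rule F_sc[OF EF])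
    show ?thesis
    proof (cases "X1 = 0")
      case True
      then show ?thesis using eF unfolding X1_def by blast
    next
      case False
      then have "degree X1 < degree X" using lam unfolding X1_def sc_def by auto
      then obtain e1 where e1: "e1 \<in> FF A P" "X1 - e1 = 0 \<or> degree (X1 - e1) < degree P * degree A"
        using less.hyps X1c by blast
      have "X - (sc lam E + e1) = X1 - e1" unfolding X1_def by (simp add: algebra_simps)
      moreover have "sc lam E + e1 \<in> FF A P" by (rule F_add[OF eF e1(1)])
      ultimately show ?thesis using e1(2) by metis
    qed
  qed
qed

lemma fsum_deg: "degree (\<Sum>j\<le>J. sc (c j) (pw P j)) \<le> J * degree P"
proof (induct J)
  case 0 then show ?case using degree_sc[of "c 0" 1] by simp
next
  case (Suc J)
  have "degree (sc (c (Suc J)) (pw P (Suc J))) \<le> Suc J * degree P"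
  proof (cases "P = 0")
    case True then show ?thesis by (simp add: pw_Suc)
  next
    case False then show ?thesis using degree_sc[of "c (Suc J)" "pw P (Suc J)"] pw_deg[OF False] by simp
  qed
  moreover have "degree (\<Sum>j\<le>J. sc (c j) (pw P j)) \<le> Suc J * degree P" using Suc by simp
  ultimately show ?case by (simp add: degree_add_le)
qed

lemma fnz:
  assumes n: "degree P \<ge> 1"
  shows "(\<exists>j\<le>J. c j \<noteq> 0) \<Longrightarrow> (\<Sum>j\<le>J. sc (c j) (pw P j)) \<noteq> 0"
proof (induct J)
  case 0 then show ?case by (simp add: sc_eq0)
next
  case (Suc J)
  have P0: "P \<noteq> 0" using n by auto
  show ?case
  proof (cases "c (Suc J) = 0")
    case True
    then have "\<exists>j\<le>J. c j \<noteq> 0" using Suc.prems by (metis le_Suc_eq)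
    then show ?thesis using Suc.hyps True by simp
  next
    case False
    let ?t = "sc (c (Suc J)) (pw P (Suc J))"
    have dt: "degree ?t = Suc J * degree P" using degree_sc_eq[OF False] pw_deg[OF P0] by simp
    have "degree (\<Sum>j\<le>J. sc (c j) (pw P j)) < degree ?t" using fsum_deg[where J=J and c=c and P=P] dt n by simp
    then have "degree ((\<Sum>j\<le>J. sc (c j) (pw P j)) + ?t) = Suc J * degree P"
      using dt degree_add_eq_right by metis
    then have "degree (\<Sum>j\<le>Suc J. sc (c j) (pw P j)) \<ge> 1" using n by simp
    then show ?thesis by auto
  qed
qed

end


context ore begin

lemma key_f:
  assumes n: "degree P \<ge> 1" and A: "A \<in> cent P" "A \<noteq> 0"
    and gen: "\<forall>Q\<in>cent P. Q \<noteq> 0 \<longrightarrow> (\<exists>i<degree P. degree Q mod degree P = (i * degree A) mod degree P)"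
    and Z: "Z \<in> cent P"
  shows "\<exists>f\<in>FF A P. f \<noteq> 0 \<and> om Z f \<in> FF A P"
proof -
  define c0 where "c0 = degree P * degree A"
  have ZP: "om Z (pw P j) \<in> cent P" for j by (rule cent_mult[OF Z pw_cent[OF cent_self]])
  have "\<forall>j. \<exists>e. e \<in> FF A P \<and> (om Z (pw P j) - e = 0 \<or> degree (om Z (pw P j) - e) < c0)"
    using decomp[OF n A gen ZP] unfolding c0_def by blast
  then obtain e where e: "\<forall>j. e j \<in> FF A P \<and> (om Z (pw P j) - e j = 0 \<or> degree (om Z (pw P j) - e j) < c0)"
    using choice[of "\<lambda>j e. e \<in> FF A P \<and> (om Z (pw P j) - e = 0 \<or> degree (om Z (pw P j) - e) < c0)"] by blast
  define r where "r j = om Z (pw P j) - e j" for j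
  have rc: "r j \<in> cent P" for j unfolding r_def using cent_diff[OF ZP FF_cent[OF A(1)]] e by blast
  have od: "\<exists>l. u - sc l v = 0 \<or> degree (u - sc l v) < degree u"
    if "u \<in> cent P" "v \<in> cent P" "u \<noteq> 0" "v \<noteq> 0" "degree u = degree v" for u v
    using one_dim[OF n that(1) that(3) that(2) that(4) that(5)] unfolding sc_def .
  have rs: "r j = 0 \<or> degree (r j) < c0" for j using e unfolding r_def by blast
  have rr: "\<forall>j\<in>{..c0}. r j \<in> cent P \<and> (r j = 0 \<or> degree (r j) < c0)" using rc rs by blast
  have fin: "finite {..c0}" by simp
  have cd: "card {..c0} > c0" by simp
  obtain c where c: "\<exists>j\<in>{..c0}. c j \<noteq> 0" "(\<Sum>j\<in>{..c0}. sc (c j) (r j)) = 0"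
    using dep[OF cent_diff cent_sc od fin cd rr] by blast
  define f where "f = (\<Sum>j\<le>c0. sc (c j) (pw P j))"
  have fF: "f \<in> FF A P" unfolding f_def by (intro F_sum F_sc F_pw F_P)
  have f0: "f \<noteq> 0" unfolding f_def using fnz[OF n] c(1) by auto
  have "om Z f = (\<Sum>j\<le>c0. sc (c j) (om Z (pw P j)))"
    unfolding f_def by (simp add: om_sum_right om_sc_right)
  also have "\<dots> = (\<Sum>j\<le>c0. sc (c j) (e j) + sc (c j) (r j))"
    unfolding r_def by (simp add: sc_add_right[symmetric])
  also have "\<dots> = (\<Sum>j\<le>c0. sc (c j) (e j))"
    using c(2) by (simp add: sum.distrib atMost_def)
  finally have "om Z f \<in> FF A P" using e by (simp add: F_sum F_sc)
  then show ?thesis using fF f0 by blast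
qed

lemma main_pos:
  assumes n: "degree P \<ge> 1" and X: "X \<in> cent P" and Y: "Y \<in> cent P"
  shows "om X Y = om Y X"
proof -
  define D where "D = {degree Q | Q. Q \<in> cent P \<and> Q \<noteq> 0}"
  have P0: "P \<noteq> 0" using n by auto
  have z: "0 \<in> D" unfolding D_def using cent_1 by force
  have dP: "degree P \<in> D" unfolding D_def using cent_self P0 by blast
  have cl: "x + y \<in> D" if "x \<in> D" "y \<in> D" for x y
  proof -
    have "x \<in> {degree Q | Q. Q \<in> cent P \<and> Q \<noteq> 0}" "y \<in> {degree Q | Q. Q \<in> cent P \<and> Q \<noteq> 0}"
      using that D_def by simp_all
    then obtain Q1 Q2 where Q: "Q1 \<in> cent P" "Q1 \<noteq> 0" "x = degree Q1" "Q2 \<in> cent P" "Q2 \<noteq> 0" "y = degree Q2"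
      by blast
    have "om Q1 Q2 \<in> cent P" "om Q1 Q2 \<noteq> 0" "degree (om Q1 Q2) = x + y"
      using cent_mult[OF Q(1,4)] om_lead[OF Q(2,5)] Q by auto
    then have "\<exists>Q. x + y = degree Q \<and> Q \<in> cent P \<and> Q \<noteq> 0" by metis
    then show ?thesis by (simp add: D_def)
  qed
  obtain a where a: "a \<in> D" and ga: "\<forall>b\<in>D. \<exists>i<degree P. b mod degree P = (i * a) mod degree P"
    using choose_gen[of "degree P" "degree P" D, OF _ dP z cl] n by auto
  obtain A where A: "A \<in> cent P" "A \<noteq> 0" "degree A = a" using a unfolding D_def by blast
  have gen: "\<forall>Q\<in>cent P. Q \<noteq> 0 \<longrightarrow> (\<exists>i<degree P. degree Q mod degree P = (i * degree A) mod degree P)"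
    using ga A(3) unfolding D_def by blast
  have AP: "om A P = om P A" using A(1) unfolding cent_def by simp
  obtain f where f: "f \<in> FF A P" "f \<noteq> 0" "om X f \<in> FF A P"
    using key_f[OF n A(1,2) gen X] by blast
  obtain g where g: "g \<in> FF A P" "g \<noteq> 0" "om Y g \<in> FF A P"
    using key_f[OF n A(1,2) gen Y] by blast
  define e1 where "e1 = om X f"
  define e2 where "e2 = om Y g"
  have "om (om X Y) (om g f) = om X (om (om Y g) f)" by (simp add: om_assoc)
  also have "\<dots> = om X (om f e2)" unfolding e2_def using FF_comm[OF AP g(3) f(1)] by simp
  also have "\<dots> = om e1 e2" unfolding e1_def by (simp add: om_assoc)
  finally have 1: "om (om X Y) (om g f) = om e1 e2" .
  have "om (om Y X) (om f g) = om Y (om (om X f) g)" by (simp add: om_assoc)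
  also have "\<dots> = om Y (om g e1)" unfolding e1_def using FF_comm[OF AP f(3) g(1)] by simp
  also have "\<dots> = om e2 e1" unfolding e2_def by (simp add: om_assoc)
  finally have 2: "om (om Y X) (om f g) = om e2 e1" .
  have 3: "om g f = om f g" by (rule FF_comm[OF AP g(1) f(1)])
  have 4: "om e1 e2 = om e2 e1" unfolding e1_def e2_def by (rule FF_comm[OF AP f(3) g(3)])
  have "om (om X Y) (om f g) = om (om Y X) (om f g)" using 1 2 3 4 by simp
  moreover have "om f g \<noteq> 0" by (rule om_nz[OF f(2) g(2)])
  ultimately show ?thesis by (rule om_cancel_right)
qed

end

theorem theorem4p1:
  fixes \<sigma> \<delta> :: "'a::field poly \<Rightarrow> 'a poly" and P :: "'a poly poly"
  assumes "K_alg_endo \<sigma>"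
    and "degree (\<sigma> [:0, 1:]) > 1"
    and "K_linear_sigma_derivation \<sigma> \<delta>"
    and "P \<notin> range (\<lambda>c. [:[:c:]:])"
  shows "\<forall>Q1\<in>ore_centralizer \<sigma> \<delta> P. \<forall>Q2\<in>ore_centralizer \<sigma> \<delta> P.
           ore_mult \<sigma> \<delta> Q1 Q2 = ore_mult \<sigma> \<delta> Q2 Q1"
proof -
  interpret ore \<sigma> \<delta> using assms(1-3) by unfold_locales
  show ?thesis
  proof (intro ballI)
    fix Q1 Q2 assume Q1: "Q1 \<in> ore_centralizer \<sigma> \<delta> P" and Q2: "Q2 \<in> ore_centralizer \<sigma> \<delta> P"
    then have Q1c: "Q1 \<in> cent P" and Q2c: "Q2 \<in> cent P" by (simp_all add: cent_eq)
    show "om Q1 Q2 = om Q2 Q1"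
    proof (cases "degree P \<ge> 1")
      case True then show ?thesis using main_pos Q1c Q2c by blast
    next
      case False
      then have P0: "degree P = 0" by simp
      show ?thesis
      proof (cases "Q1 = 0 \<or> Q2 = 0")
        case True then show ?thesis by auto
      next
        case False
        then have "degree Q1 = 0" "degree Q2 = 0"
          using deg0_case[OF P0 assms(4)] Q1c Q2c by auto
        then obtain q1 q2 where "Q1 = [:q1:]" "Q2 = [:q2:]" by (metis degree_eq_zeroE)
        then show ?thesis by (simp add: om_const_left mult.commute)
      qed
    qed
  qed
qed


end
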